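(* Let $(L,\alpha_L)$ be a perfect Hom-Leibniz $n$-algebra with $\alpha_L$ injective such that both $(L,\alpha_L)$ and $(\mathfrak{uce}(L),\alpha_{\mathfrak{uce}(L)})$ satisfy condition (C). Then there is an isomorphism (induced by $u_L$) $$\frac{\alpha_L(L)}{Z(\alpha_L(L))}\cong\frac{\alpha_{\mathfrak{uce}(L)}(\mathfrak{uce}(L))}{Z(\alpha_{\mathfrak{uce}(L)}(\mathfrak{uce}(L)))}.$$
   Context: Fix a field $\mathbb K$ and $n\ge2$. A (multiplicative) Hom-Leibniz $n$-algebra is a $\mathbb K$-vector space $L$ with an $n$-linear bracket and a linear map $\alpha_L$ preserving the bracket, satisfying $[[x_1,\dots,x_n],\alpha_L(y_1),\dots,\alpha_L(y_{n-1})]=\sum_{i=1}^n[\alpha_L(x_1),\dots,[x_i,y_1,\dots,y_{n-1}],\dots,\alpha_L(x_n)]$. Perfect: $L=[L,\dots,L]$. For a subspace $S$ closed under the bracket, $Z(S)$ is the set of $x\in S$ such that every bracket with $x$ in some position and all other entries in $S$ is $0$. Condition (C) for $(K,\alpha_K)$: $[\alpha_K(k),\alpha_K(k),\alpha_K(k_3),\dots,\alpha_K(k_n)]=0$ for all $k,k_3,\dots,k_n\in K$. Define $\delta_2:L^{\otimes(2n-1)}\to L^{\otimes n}$, $\delta_2(x_1\otimes\dots\otimes x_n\otimes y_1\otimes\dots\otimes y_{n-1})=[x_1,\dots,x_n]\otimes\alpha_L(y_1)\otimes\dots\otimes\alpha_L(y_{n-1})-\sum_{i=1}^n\alpha_L(x_1)\otimes\dots\otimes[x_i,y_1,\dots,y_{n-1}]\otimes\dots\otimes\alpha_L(x_n)$.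 $\mathfrak{uce}(L)=L^{\otimes n}/\operatorname{im}\delta_2$, classes written $\{x_1,\dots,x_n\}$, with bracket $[\{x_{1,1},\dots,x_{n,1}\},\dots,\{x_{1,n},\dots,x_{n,n}\}]=\{[x_{1,1},\dots,x_{n,1}],\dots,[x_{1,n},\dots,x_{n,n}]\}$ and $\alpha_{\mathfrak{uce}(L)}\{x_1,\dots,x_n\}=\{\alpha_L(x_1),\dots,\alpha_L(x_n)\}$; $u_L:\mathfrak{uce}(L)\to L$, $u_L\{x_1,\dots,x_n\}=[x_1,\dots,x_n]$, is the universal central extension of the perfect $L$. *)

theory Defs
  imports Complex_Main
begin

text \<open>An n-linear bracket is modelled as a map on lists, meaningful on lists of length n.\<close>

definition nlinear :: "nat \<Rightarrow> ('k::field \<Rightarrow> 'v::ab_group_add \<Rightarrow> 'v) \<Rightarrow> ('v list \<Rightarrow> 'v) \<Rightarrow> bool" where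
  "nlinear n scale br \<longleftrightarrow>
     (\<forall>xs i a b. length xs = n \<and> i < n \<longrightarrow> br (xs[i := a + b]) = br (xs[i := a]) + br (xs[i := b])) \<and>
     (\<forall>xs i c a. length xs = n \<and> i < n \<longrightarrow> br (xs[i := scale c a]) = scale c (br (xs[i := a])))"

definition hom_leibniz_nalg ::
  "nat \<Rightarrow> ('k::field \<Rightarrow> 'v::ab_group_add \<Rightarrow> 'v) \<Rightarrow> ('v list \<Rightarrow> 'v) \<Rightarrow> ('v \<Rightarrow> 'v) \<Rightarrow> bool" where
  "hom_leibniz_nalg n scale br \<alpha> \<longleftrightarrow>
     2 \<le> n \<and> vector_space scale \<and> nlinear n scale br \<and> Vector_Spaces.linear scale scale \<alpha> \<and>
     \<comment> \<open>multiplicative\<close>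
     (\<forall>xs. length xs = n \<longrightarrow> \<alpha> (br xs) = br (map \<alpha> xs)) \<and>
     \<comment> \<open>Hom-Leibniz identity\<close>
     (\<forall>xs ys. length xs = n \<and> length ys = n - 1 \<longrightarrow>
        br (br xs # map \<alpha> ys) = (\<Sum>i<n. br ((map \<alpha> xs)[i := br (xs ! i # ys)])))"

definition perfect :: "nat \<Rightarrow> ('k::field \<Rightarrow> 'v::ab_group_add \<Rightarrow> 'v) \<Rightarrow> ('v list \<Rightarrow> 'v) \<Rightarrow> bool" where
  "perfect n scale br \<longleftrightarrow> module.span scale {br xs | xs. length xs = n} = UNIV"

definition centre :: "nat \<Rightarrow> 'a set \<Rightarrow> ('a list \<Rightarrow> 'a) \<Rightarrow> 'a \<Rightarrow> 'a set" where
  "centre n S br z = {x \<in> S. \<forall>ys i. set ys \<subseteq> S \<and> length ys = n - 1 \<and> i \<le> n - 1 \<longrightarrow>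
                          br (take i ys @ x # drop i ys) = z}"

definition condC :: "nat \<Rightarrow> 'a set \<Rightarrow> ('a list \<Rightarrow> 'a) \<Rightarrow> ('a \<Rightarrow> 'a) \<Rightarrow> 'a \<Rightarrow> bool" where
  "condC n S br \<alpha> z \<longleftrightarrow> (\<forall>k ks. k \<in> S \<and> set ks \<subseteq> S \<and> length ks = n - 2 \<longrightarrow>
                          br (\<alpha> k # \<alpha> k # map \<alpha> ks) = z)"

definition cls :: "('a \<Rightarrow> 'a \<Rightarrow> 'a) \<Rightarrow> 'a set \<Rightarrow> 'a \<Rightarrow> 'a set" where
  "cls add Z x = {add x z | z. z \<in> Z}"

definition quot :: "('a \<Rightarrow> 'a \<Rightarrow> 'a) \<Rightarrow> 'a set \<Rightarrow> 'a set \<Rightarrow> 'a set set" where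
  "quot add A Z = cls add Z ` A"

text \<open>L^{\<otimes>n} is realised as the free K-vector space on n-tuples (finitely supported
  functions 'v list \<Rightarrow> 'k supported on lists of length n) modulo multilinearity relations;
  uce(L) is its quotient by im \<delta>2, i.e. the free space modulo the subspace rels generated by
  multilinearity relations and the \<delta>2-relations.\<close>

definition tens :: "'v list \<Rightarrow> 'v list \<Rightarrow> 'k::field" where
  "tens xs = (\<lambda>ys. if ys = xs then 1 else 0)"

definition freesp :: "nat \<Rightarrow> ('v list \<Rightarrow> 'k::field) set" where
  "freesp n = {f. finite {xs. f xs \<noteq> 0} \<and> (\<forall>xs. f xs \<noteq> 0 \<longrightarrow> length xs = n)}"

inductive_set rels :: "nat \<Rightarrow> ('k::field \<Rightarrow> 'v::ab_group_add \<Rightarrow> 'v) \<Rightarrow> ('v list \<Rightarrow> 'v) \<Rightarrow> ('v \<Rightarrow> 'v)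
    \<Rightarrow> ('v list \<Rightarrow> 'k) set"
  for n scale br \<alpha> where
  add_rel: "length xs = n \<Longrightarrow> i < n \<Longrightarrow>
     (\<lambda>ys. tens (xs[i := a + b]) ys - tens (xs[i := a]) ys - tens (xs[i := b]) ys) \<in> rels n scale br \<alpha>"
| smul_rel: "length xs = n \<Longrightarrow> i < n \<Longrightarrow>
     (\<lambda>ys. tens (xs[i := scale c a]) ys - c * tens (xs[i := a]) ys) \<in> rels n scale br \<alpha>"
| delta2_rel: "length xs = n \<Longrightarrow> length zs = n - 1 \<Longrightarrow>
     (\<lambda>ys. tens (br xs # map \<alpha> zs) ys - (\<Sum>i<n. tens ((map \<alpha> xs)[i := br (xs ! i # zs)]) ys))
       \<in> rels n scale br \<alpha>"
| zero_rel: "(\<lambda>ys. 0) \<in> rels n scale br \<alpha>"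
| plus_rel: "r \<in> rels n scale br \<alpha> \<Longrightarrow> s \<in> rels n scale br \<alpha> \<Longrightarrow> (\<lambda>ys. r ys + s ys) \<in> rels n scale br \<alpha>"
| scal_rel: "r \<in> rels n scale br \<alpha> \<Longrightarrow> (\<lambda>ys. c * r ys) \<in> rels n scale br \<alpha>"

text \<open>Coset f + im \<delta>2 (the class written \{x1,...,xn\} when f = tens [x1,...,xn]).\<close>
definition ucls :: "nat \<Rightarrow> ('k::field \<Rightarrow> 'v::ab_group_add \<Rightarrow> 'v) \<Rightarrow> ('v list \<Rightarrow> 'v) \<Rightarrow> ('v \<Rightarrow> 'v)
    \<Rightarrow> ('v list \<Rightarrow> 'k) \<Rightarrow> ('v list \<Rightarrow> 'k) set" where
  "ucls n scale br \<alpha> f = {(\<lambda>ys. f ys + r ys) | r. r \<in> rels n scale br \<alpha>}"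

definition uce :: "nat \<Rightarrow> ('k::field \<Rightarrow> 'v::ab_group_add \<Rightarrow> 'v) \<Rightarrow> ('v list \<Rightarrow> 'v) \<Rightarrow> ('v \<Rightarrow> 'v)
    \<Rightarrow> ('v list \<Rightarrow> 'k) set set" where
  "uce n scale br \<alpha> = ucls n scale br \<alpha> ` freesp n"

text \<open>Addition and zero of uce(L) (sum of cosets; zero = im \<delta>2).\<close>
definition uce_add :: "('v list \<Rightarrow> 'k::field) set \<Rightarrow> ('v list \<Rightarrow> 'k) set \<Rightarrow> ('v list \<Rightarrow> 'k) set" where
  "uce_add C D = {(\<lambda>ys. c ys + d ys) | c d. c \<in> C \<and> d \<in> D}"

definition uce_smul :: "nat \<Rightarrow> ('k::field \<Rightarrow> 'v::ab_group_add \<Rightarrow> 'v) \<Rightarrow> ('v list \<Rightarrow> 'v) \<Rightarrow> ('v \<Rightarrow> 'v)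
    \<Rightarrow> 'k \<Rightarrow> ('v list \<Rightarrow> 'k) set \<Rightarrow> ('v list \<Rightarrow> 'k) set" where
  "uce_smul n scale br \<alpha> c C = {(\<lambda>ys. c * f ys + r ys) | f r. f \<in> C \<and> r \<in> rels n scale br \<alpha>}"

definition uF :: "('k::field \<Rightarrow> 'v::ab_group_add \<Rightarrow> 'v) \<Rightarrow> ('v list \<Rightarrow> 'v) \<Rightarrow> ('v list \<Rightarrow> 'k) \<Rightarrow> 'v" where
  "uF scale br f = (\<Sum>xs | f xs \<noteq> 0. scale (f xs) (br xs))"

text \<open>u_L : uce(L) \<rightarrow> L, u_L\{x1,...,xn\} = [x1,...,xn] (evaluated on a representative).\<close>
definition uL :: "('k::field \<Rightarrow> 'v::ab_group_add \<Rightarrow> 'v) \<Rightarrow> ('v list \<Rightarrow> 'v) \<Rightarrow> ('v list \<Rightarrow> 'k) set \<Rightarrow> 'v" where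
  "uL scale br C = uF scale br (SOME f. f \<in> C)"

definition alphaF :: "('v \<Rightarrow> 'v) \<Rightarrow> ('v list \<Rightarrow> 'k::field) \<Rightarrow> ('v list \<Rightarrow> 'k)" where
  "alphaF \<alpha> f = (\<lambda>ys. \<Sum>xs | f xs \<noteq> 0 \<and> map \<alpha> xs = ys. f xs)"

definition alpha_uce :: "nat \<Rightarrow> ('k::field \<Rightarrow> 'v::ab_group_add \<Rightarrow> 'v) \<Rightarrow> ('v list \<Rightarrow> 'v) \<Rightarrow> ('v \<Rightarrow> 'v)
    \<Rightarrow> ('v list \<Rightarrow> 'k) set \<Rightarrow> ('v list \<Rightarrow> 'k) set" where
  "alpha_uce n scale br \<alpha> C = {(\<lambda>ys. alphaF \<alpha> f ys + r ys) | f r. f \<in> C \<and> r \<in> rels n scale br \<alpha>}"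

text \<open>Bracket of uce(L): [\{x_{1,1},...,x_{n,1}\},...,\{x_{1,n},...,x_{n,n}\}]
  = \{[x_{1,1},...,x_{n,1}],...,[x_{1,n},...,x_{n,n}]\}, i.e. (extended multilinearly)
  [C1,...,Cn] = \{u_L C1,...,u_L Cn\}.\<close>
definition br_uce :: "nat \<Rightarrow> ('k::field \<Rightarrow> 'v::ab_group_add \<Rightarrow> 'v) \<Rightarrow> ('v list \<Rightarrow> 'v) \<Rightarrow> ('v \<Rightarrow> 'v)
    \<Rightarrow> ('v list \<Rightarrow> 'k) set list \<Rightarrow> ('v list \<Rightarrow> 'k) set" where
  "br_uce n scale br \<alpha> Cs = ucls n scale br \<alpha> (tens (map (uL scale br) Cs))"

end

theory Submission
  imports Defs
begin

definition fs :: "('a \<Rightarrow> 'k::zero) \<Rightarrow> bool" where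
  "fs f \<longleftrightarrow> finite {x. f x \<noteq> 0}"

lemma fs_tens: "fs (tens xs :: _ \<Rightarrow> 'k::field)"
  unfolding fs_def tens_def by (rule finite_subset[of _ "{xs}"]) auto

lemma fs_zero: "fs (\<lambda>y. 0)" unfolding fs_def by simp

lemma fs_lin: "fs f \<Longrightarrow> fs g \<Longrightarrow> fs (\<lambda>y. a * f y + b * (g y :: 'k::field))"
  unfolding fs_def
  by (rule finite_subset[of _ "{x. f x \<noteq> 0} \<union> {x. g x \<noteq> 0}"]) auto

lemma fs_add: "fs f \<Longrightarrow> fs g \<Longrightarrow> fs (\<lambda>y. f y + (g y :: 'k::field))"
  using fs_lin[of f g 1 1] by simp

lemma fs_scal: "fs f \<Longrightarrow> fs (\<lambda>y. c * (f y :: 'k::field))"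
  using fs_lin[of f f c 0] by simp

lemma fs_diff: "fs f \<Longrightarrow> fs g \<Longrightarrow> fs (\<lambda>y. f y - (g y :: 'k::field))"
  using fs_lin[of f g 1 "-1"] by simp

lemma fs_sum: "finite I \<Longrightarrow> (\<And>i. i \<in> I \<Longrightarrow> fs (f i)) \<Longrightarrow> fs (\<lambda>y. \<Sum>i\<in>I. (f i y :: 'k::field))"
proof (induction I rule: finite_induct)
  case empty then show ?case by (simp add: fs_zero)
next
  case (insert x F) then show ?case by (simp add: fs_add)
qed

lemma freesp_fs: "f \<in> freesp n \<Longrightarrow> fs f" unfolding freesp_def fs_def by auto

lemma freesp_lin: "f \<in> freesp n \<Longrightarrow> g \<in> freesp n \<Longrightarrow> (\<lambda>y. a * f y + b * g y) \<in> freesp n"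
  unfolding freesp_def using fs_lin[of f g a b] unfolding fs_def by auto (metis add.right_neutral mult_zero_right)

lemma freesp_zero: "(\<lambda>y. 0) \<in> freesp n" unfolding freesp_def by simp

lemma freesp_tens: "length xs = n \<Longrightarrow> tens xs \<in> freesp n"
  unfolding freesp_def using fs_tens[of xs] unfolding fs_def by (auto simp: tens_def)

locale HLC =
  fixes n :: nat and scale :: "'k::field \<Rightarrow> 'v::ab_group_add \<Rightarrow> 'v"
    and br :: "'v list \<Rightarrow> 'v" and \<alpha> :: "'v \<Rightarrow> 'v"
  assumes HL: "hom_leibniz_nalg n scale br \<alpha>"
begin

lemma VS: "vector_space scale" using HL unfolding hom_leibniz_nalg_def by auto

sublocale V: vector_space scale by (rule VS)

lemma n2: "2 \<le> n" using HL unfolding hom_leibniz_nalg_def by auto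

lemma nl_add: "length xs = n \<Longrightarrow> i < n \<Longrightarrow> br (xs[i := a + b]) = br (xs[i := a]) + br (xs[i := b])"
  using HL unfolding hom_leibniz_nalg_def nlinear_def by auto
lemma nl_smul: "length xs = n \<Longrightarrow> i < n \<Longrightarrow> br (xs[i := scale c a]) = scale c (br (xs[i := a]))"
  using HL unfolding hom_leibniz_nalg_def nlinear_def by auto
lemma mult: "length xs = n \<Longrightarrow> \<alpha> (br xs) = br (map \<alpha> xs)"
  using HL unfolding hom_leibniz_nalg_def by auto
lemma leib: "length xs = n \<Longrightarrow> length ys = n - 1 \<Longrightarrow>
        br (br xs # map \<alpha> ys) = (\<Sum>i<n. br ((map \<alpha> xs)[i := br (xs ! i # ys)]))"
  using HL unfolding hom_leibniz_nalg_def by auto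

lemma lin_alpha: "Vector_Spaces.linear scale scale \<alpha>" using HL unfolding hom_leibniz_nalg_def by auto
sublocale A: Vector_Spaces.linear scale scale \<alpha> by (rule lin_alpha)

lemma br_zero: "length xs = n \<Longrightarrow> i < n \<Longrightarrow> br (xs[i := 0]) = 0"
  using nl_add[of xs i 0 0] by simp

abbreviation R where "R \<equiv> rels n scale br \<alpha>"

lemma R_fs: "r \<in> R \<Longrightarrow> fs r"
proof (induction rule: rels.induct)
  case (add_rel xs i a b) then show ?case by (intro fs_diff fs_tens)
next
  case (smul_rel xs i c a) then show ?case by (intro fs_diff fs_tens fs_scal)
next
  case (delta2_rel xs zs) then show ?case by (intro fs_diff fs_tens fs_sum) auto
qed (auto intro: fs_zero fs_add fs_scal)

lemma R_zero: "(\<lambda>y. 0) \<in> R" by (rule zero_rel)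
lemma R_add: "r \<in> R \<Longrightarrow> s \<in> R \<Longrightarrow> (\<lambda>y. r y + s y) \<in> R" by (rule plus_rel)
lemma R_scal: "r \<in> R \<Longrightarrow> (\<lambda>y. c * r y) \<in> R" by (rule scal_rel)
lemma R_neg: "r \<in> R \<Longrightarrow> (\<lambda>y. - r y) \<in> R" using scal_rel[of r n scale br \<alpha> "-1"] by simp
lemma R_diff: "r \<in> R \<Longrightarrow> s \<in> R \<Longrightarrow> (\<lambda>y. r y - s y) \<in> R"
  using R_add[OF _ R_neg[of s]] by simp
lemma R_sum: "finite I \<Longrightarrow> (\<And>i. i \<in> I \<Longrightarrow> f i \<in> R) \<Longrightarrow> (\<lambda>y. \<Sum>i\<in>I. f i y) \<in> R"
proof (induction I rule: finite_induct)
  case empty then show ?case by (simp add: R_zero)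
next
  case (insert x F) then show ?case using R_add[of "f x" "\<lambda>y. \<Sum>i\<in>F. f i y"] by simp
qed
lemma R_eq: "r \<in> R \<Longrightarrow> (\<And>y. s y = r y) \<Longrightarrow> s \<in> R"
proof -
  assume "r \<in> R" "\<And>y. s y = r y" then have "s = r" by auto
  with \<open>r \<in> R\<close> show ?thesis by simp
qed

lemma uF_eq: "finite S \<Longrightarrow> {xs. f xs \<noteq> 0} \<subseteq> S \<Longrightarrow> uF scale br f = (\<Sum>xs\<in>S. scale (f xs) (br xs))"
  unfolding uF_def by (rule sum.mono_neutral_left) auto

lemma uF_lin: assumes "fs f" "fs g"
  shows "uF scale br (\<lambda>y. a * f y + b * g y) = scale a (uF scale br f) + scale b (uF scale br g)"
proof -
  let ?S = "{x. f x \<noteq> 0} \<union> {x. g x \<noteq> 0}"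
  have fin: "finite ?S" using assms unfolding fs_def by auto
  have "uF scale br (\<lambda>y. a * f y + b * g y) = (\<Sum>xs\<in>?S. scale (a * f xs + b * g xs) (br xs))"
    by (rule uF_eq[OF fin]) auto
  also have "\<dots> = scale a (\<Sum>xs\<in>?S. scale (f xs) (br xs)) + scale b (\<Sum>xs\<in>?S. scale (g xs) (br xs))"
    by (simp add: V.scale_left_distrib sum.distrib V.scale_sum_right)
  also have "\<dots> = scale a (uF scale br f) + scale b (uF scale br g)"
    using uF_eq[OF fin, of f] uF_eq[OF fin, of g] by auto
  finally show ?thesis .
qed

lemma uF_add: "fs f \<Longrightarrow> fs g \<Longrightarrow> uF scale br (\<lambda>y. f y + g y) = uF scale br f + uF scale br g"
  using uF_lin[of f g 1 1] by simp
lemma uF_scal: "fs f \<Longrightarrow> uF scale br (\<lambda>y. c * f y) = scale c (uF scale br f)"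
  using uF_lin[of f f c 0] by simp
lemma uF_diff: "fs f \<Longrightarrow> fs g \<Longrightarrow> uF scale br (\<lambda>y. f y - g y) = uF scale br f - uF scale br g"
  using uF_lin[of f g 1 "-1"] by simp
lemma uF_zero: "uF scale br (\<lambda>y. 0) = 0" unfolding uF_def by simp
lemma uF_tens: "uF scale br (tens xs) = br xs"
  using uF_eq[of "{xs}" "tens xs"] by (auto simp: tens_def)
lemma uF_sum: "finite I \<Longrightarrow> (\<And>i. i \<in> I \<Longrightarrow> fs (f i)) \<Longrightarrow>
   uF scale br (\<lambda>y. \<Sum>i\<in>I. f i y) = (\<Sum>i\<in>I. uF scale br (f i))"
proof (induction I rule: finite_induct)
  case empty then show ?case by (simp add: uF_zero)
next
  case (insert x F) then show ?case
    using uF_add[of "f x" "\<lambda>y. \<Sum>i\<in>F. f i y"] fs_sum[of F f] by simp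
qed

lemma uF_R: "r \<in> R \<Longrightarrow> uF scale br r = 0"
proof (induction rule: rels.induct)
  case (add_rel xs i a b)
  then show ?case using nl_add[of xs i a b]
    by (simp add: uF_diff fs_diff fs_tens uF_tens)
next
  case (smul_rel xs i c a)
  then show ?case using nl_smul[of xs i c a]
    by (simp add: uF_diff fs_scal fs_tens uF_tens uF_scal)
next
  case (delta2_rel xs zs)
  then show ?case using leib[of xs zs]
    by (simp add: uF_diff fs_sum fs_tens uF_tens uF_sum)
next
  case zero_rel then show ?case by (simp add: uF_zero)
next
  case (plus_rel r s) then show ?case by (simp add: uF_add R_fs)
next
  case (scal_rel r c) then show ?case by (simp add: uF_scal R_fs)
qed

abbreviation aF where "aF \<equiv> alphaF \<alpha>"

lemma aF_eq: "finite S \<Longrightarrow> {xs. f xs \<noteq> 0} \<subseteq> S \<Longrightarrow> aF f ys = (\<Sum>xs\<in>{xs\<in>S. map \<alpha> xs = ys}. f xs)"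
  unfolding alphaF_def by (rule sum.mono_neutral_left) auto

lemma aF_lin: assumes "fs f" "fs g"
  shows "aF (\<lambda>y. a * f y + b * g y) = (\<lambda>ys. a * aF f ys + b * aF g ys)"
proof
  fix ys
  let ?S = "{x. f x \<noteq> 0} \<union> {x. g x \<noteq> 0}"
  have fin: "finite ?S" using assms unfolding fs_def by auto
  have "aF (\<lambda>y. a * f y + b * g y) ys = (\<Sum>xs\<in>{xs\<in>?S. map \<alpha> xs = ys}. a * f xs + b * g xs)"
    by (rule aF_eq[OF fin]) auto
  also have "\<dots> = a * (\<Sum>xs\<in>{xs\<in>?S. map \<alpha> xs = ys}. f xs) + b * (\<Sum>xs\<in>{xs\<in>?S. map \<alpha> xs = ys}. g xs)"
    by (simp add: sum.distrib sum_distrib_left)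
  also have "\<dots> = a * aF f ys + b * aF g ys"
    using aF_eq[OF fin, of f] aF_eq[OF fin, of g] by auto
  finally show "aF (\<lambda>y. a * f y + b * g y) ys = a * aF f ys + b * aF g ys" .
qed

lemma aF_add: "fs f \<Longrightarrow> fs g \<Longrightarrow> aF (\<lambda>y. f y + g y) = (\<lambda>ys. aF f ys + aF g ys)"
  using aF_lin[of f g 1 1] by simp
lemma aF_scal: "fs f \<Longrightarrow> aF (\<lambda>y. c * f y) = (\<lambda>ys. c * aF f ys)"
  using aF_lin[of f f c 0] by simp
lemma aF_diff: "fs f \<Longrightarrow> fs g \<Longrightarrow> aF (\<lambda>y. f y - g y) = (\<lambda>ys. aF f ys - aF g ys)"
  using aF_lin[of f g 1 "-1"] by simp
lemma aF_zero: "aF (\<lambda>y. 0) = (\<lambda>y. 0)" unfolding alphaF_def by simp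
lemma aF_tens: "aF (tens xs) = tens (map \<alpha> xs)"
proof
  fix ys
  have S: "{x\<in>{xs}. map \<alpha> x = ys} = (if map \<alpha> xs = ys then {xs} else {})" by auto
  have "aF (tens xs) ys = (\<Sum>x\<in>{x\<in>{xs}. map \<alpha> x = ys}. tens xs x)"
    by (rule aF_eq) (auto simp: tens_def)
  also have "\<dots> = (\<Sum>x\<in>(if map \<alpha> xs = ys then {xs} else {}). tens xs x)" by (simp only: S)
  also have "\<dots> = tens (map \<alpha> xs) ys"
    by (cases "map \<alpha> xs = ys") (simp_all only: if_True if_False sum.empty sum.insert_remove, auto simp: tens_def)
  finally show "aF (tens xs) ys = tens (map \<alpha> xs) ys" .
qed
lemma aF_nz: "aF f ys \<noteq> 0 \<Longrightarrow> \<exists>xs. f xs \<noteq> 0 \<and> map \<alpha> xs = ys"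
proof (rule ccontr)
  assume "aF f ys \<noteq> 0" "\<not> (\<exists>xs. f xs \<noteq> 0 \<and> map \<alpha> xs = ys)"
  then have "{xs. f xs \<noteq> 0 \<and> map \<alpha> xs = ys} = {}" by auto
  then have "aF f ys = 0" unfolding alphaF_def by (simp only: sum.empty)
  with \<open>aF f ys \<noteq> 0\<close> show False by simp
qed
lemma aF_fs: "fs f \<Longrightarrow> fs (aF f)"
  unfolding fs_def
  by (rule finite_subset[of _ "map \<alpha> ` {x. f x \<noteq> 0}"]) (auto dest: aF_nz)
lemma aF_sum: "finite I \<Longrightarrow> (\<And>i. i \<in> I \<Longrightarrow> fs (f i)) \<Longrightarrow>
   aF (\<lambda>y. \<Sum>i\<in>I. f i y) = (\<lambda>ys. \<Sum>i\<in>I. aF (f i) ys)"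
proof (induction I rule: finite_induct)
  case empty then show ?case by (simp add: aF_zero)
next
  case (insert x F) then show ?case
    using aF_add[of "f x" "\<lambda>y. \<Sum>i\<in>F. f i y"] fs_sum[of F f] by simp
qed

lemma freesp_aF: "f \<in> freesp n \<Longrightarrow> aF f \<in> freesp n"
  using aF_fs[OF freesp_fs] unfolding freesp_def fs_def by (auto dest!: aF_nz)

lemma aF_R: "r \<in> R \<Longrightarrow> aF r \<in> R"
proof (induction rule: rels.induct)
  case (add_rel xs i a b)
  have eq: "aF (\<lambda>ys. tens (xs[i := a + b]) ys - tens (xs[i := a]) ys - tens (xs[i := b]) ys)
     = (\<lambda>ys. tens ((map \<alpha> xs)[i := \<alpha> a + \<alpha> b]) ys - tens ((map \<alpha> xs)[i := \<alpha> a]) ys - tens ((map \<alpha> xs)[i := \<alpha> b]) ys)"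
    by (simp add: aF_diff fs_diff fs_tens aF_tens map_update A.add)
  show ?case unfolding eq by (rule rels.add_rel) (use add_rel in simp_all)
next
  case (smul_rel xs i c a)
  have eq: "aF (\<lambda>ys. tens (xs[i := scale c a]) ys - c * tens (xs[i := a]) ys)
     = (\<lambda>ys. tens ((map \<alpha> xs)[i := scale c (\<alpha> a)]) ys - c * tens ((map \<alpha> xs)[i := \<alpha> a]) ys)"
    by (simp add: aF_diff fs_diff fs_tens fs_scal aF_scal aF_tens map_update A.scale)
  show ?case unfolding eq by (rule rels.smul_rel) (use smul_rel in simp_all)
next
  case (delta2_rel xs zs)
  let ?Y = "\<lambda>i. (map \<alpha> xs)[i := br (xs ! i # zs)]"
  let ?Y' = "\<lambda>i. (map \<alpha> (map \<alpha> xs))[i := br (map \<alpha> xs ! i # map \<alpha> zs)]"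
  have Yeq: "map \<alpha> (?Y i) = ?Y' i" if "i < n" for i
  proof -
    have "\<alpha> (br (xs ! i # zs)) = br (map \<alpha> xs ! i # map \<alpha> zs)"
      using delta2_rel that mult[of "xs ! i # zs"] n2 by simp
    then show ?thesis by (simp add: map_update)
  qed
  have s1: "aF (\<lambda>ys. \<Sum>i<n. tens (?Y i) ys) = (\<lambda>ys. \<Sum>i<n. tens (?Y' i) ys)"
  proof -
    have "aF (\<lambda>ys. \<Sum>i<n. tens (?Y i) ys) = (\<lambda>ys. \<Sum>i<n. aF (tens (?Y i)) ys)"
      by (rule aF_sum) (auto simp: fs_tens)
    also have "\<dots> = (\<lambda>ys. \<Sum>i<n. tens (?Y' i) ys)"
      by (rule ext, rule sum.cong[OF refl]) (simp add: aF_tens Yeq)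
    finally show ?thesis .
  qed
  have s2: "aF (tens (br xs # map \<alpha> zs)) = tens (br (map \<alpha> xs) # map \<alpha> (map \<alpha> zs))"
    using delta2_rel by (simp add: aF_tens mult)
  have eq2: "aF (\<lambda>ys. tens (br xs # map \<alpha> zs) ys - (\<Sum>i<n. tens (?Y i) ys))
     = (\<lambda>ys. tens (br (map \<alpha> xs) # map \<alpha> (map \<alpha> zs)) ys - (\<Sum>i<n. tens (?Y' i) ys))"
    by (subst aF_diff) (auto simp: fs_tens fs_sum s1 s2)
  show ?case unfolding eq2 by (rule rels.delta2_rel) (use delta2_rel in simp_all)
next
  case zero_rel then show ?case by (simp add: aF_zero R_zero)
next
  case (plus_rel r s) then show ?case by (simp add: aF_add R_fs R_add)
next
  case (scal_rel r c) then show ?case by (simp add: aF_scal R_fs R_scal)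
qed

abbreviation U where "U \<equiv> ucls n scale br \<alpha>"

lemma ucls_mem: "g \<in> U f \<longleftrightarrow> (\<lambda>ys. g ys - f ys) \<in> R"
proof
  assume "g \<in> U f"
  then obtain r where r: "r \<in> R" "g = (\<lambda>ys. f ys + r ys)" unfolding ucls_def by auto
  then show "(\<lambda>ys. g ys - f ys) \<in> R" by (intro R_eq[OF r(1)]) simp
next
  assume "(\<lambda>ys. g ys - f ys) \<in> R"
  then show "g \<in> U f" unfolding ucls_def
    by (intro CollectI exI[of _ "\<lambda>ys. g ys - f ys"] conjI) auto
qed

lemma ucls_eq_iff: "U f = U g \<longleftrightarrow> (\<lambda>ys. f ys - g ys) \<in> R"
proof
  assume "U f = U g"
  moreover have "f \<in> U f" by (simp add: ucls_mem R_zero)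
  ultimately show "(\<lambda>ys. f ys - g ys) \<in> R" by (simp add: ucls_mem)
next
  assume d: "(\<lambda>ys. f ys - g ys) \<in> R"
  show "U f = U g"
  proof (rule set_eqI)
    fix h
    have "(\<lambda>ys. h ys - f ys) \<in> R \<longleftrightarrow> (\<lambda>ys. h ys - g ys) \<in> R"
    proof
      assume "(\<lambda>ys. h ys - f ys) \<in> R"
      from R_add[OF this d] show "(\<lambda>ys. h ys - g ys) \<in> R" by (rule R_eq) simp
    next
      assume "(\<lambda>ys. h ys - g ys) \<in> R"
      from R_diff[OF this d] show "(\<lambda>ys. h ys - f ys) \<in> R" by (rule R_eq) simp
    qed
    then show "h \<in> U f \<longleftrightarrow> h \<in> U g" by (simp add: ucls_mem)
  qed
qed

lemma ucls_zero: "U (\<lambda>ys. 0) = R"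
  by (rule set_eqI) (simp add: ucls_mem)

lemma ucls_eq_R: "U f = R \<longleftrightarrow> f \<in> R"
  using ucls_eq_iff[of f "\<lambda>ys. 0"] by (simp add: ucls_zero)

lemma uL_ucls: assumes "fs f" shows "uL scale br (U f) = uF scale br f"
proof -
  have ex: "\<exists>g. g \<in> U f" using ucls_mem[of f f] R_zero by auto
  define g where "g = (SOME g. g \<in> U f)"
  have g: "g \<in> U f" unfolding g_def using someI_ex[OF ex] .
  then have d: "(\<lambda>ys. g ys - f ys) \<in> R" by (simp add: ucls_mem)
  have "g = (\<lambda>ys. f ys + (g ys - f ys))" by simp
  then have "uF scale br g = uF scale br f + uF scale br (\<lambda>ys. g ys - f ys)"
    using uF_add[OF assms R_fs[OF d]] by metis
  then have "uF scale br g = uF scale br f" using uF_R[OF d] by simp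
  then show ?thesis unfolding uL_def g_def .
qed

lemma alpha_ucls: assumes "fs f" shows "alpha_uce n scale br \<alpha> (U f) = U (aF f)"
proof (rule set_eqI)
  fix h
  show "h \<in> alpha_uce n scale br \<alpha> (U f) \<longleftrightarrow> h \<in> U (aF f)"
  proof
    assume "h \<in> alpha_uce n scale br \<alpha> (U f)"
    then obtain g r where g: "g \<in> U f" and r: "r \<in> R" and h: "h = (\<lambda>ys. aF g ys + r ys)"
      unfolding alpha_uce_def by auto
    from g have d: "(\<lambda>ys. g ys - f ys) \<in> R" by (simp add: ucls_mem)
    have "g = (\<lambda>ys. f ys + (g ys - f ys))" by simp
    then have "aF g = (\<lambda>ys. aF f ys + aF (\<lambda>ys. g ys - f ys) ys)"
      using aF_add[OF assms R_fs[OF d]] by metis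
    then have "(\<lambda>ys. h ys - aF f ys) = (\<lambda>ys. aF (\<lambda>ys. g ys - f ys) ys + r ys)"
      unfolding h by auto
    moreover have "(\<lambda>ys. aF (\<lambda>ys. g ys - f ys) ys + r ys) \<in> R"
      by (rule R_add[OF aF_R[OF d] r])
    ultimately show "h \<in> U (aF f)" by (simp add: ucls_mem)
  next
    assume "h \<in> U (aF f)"
    then have "(\<lambda>ys. h ys - aF f ys) \<in> R" by (simp add: ucls_mem)
    moreover have "f \<in> U f" by (simp add: ucls_mem R_zero)
    ultimately show "h \<in> alpha_uce n scale br \<alpha> (U f)" unfolding alpha_uce_def
      by (intro CollectI exI[of _ f] exI[of _ "\<lambda>ys. h ys - aF f ys"] conjI) auto
  qed
qed

lemma uce_add_ucls: "uce_add (U f) (U g) = U (\<lambda>ys. f ys + g ys)"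
proof (rule set_eqI)
  fix h
  show "h \<in> uce_add (U f) (U g) \<longleftrightarrow> h \<in> U (\<lambda>ys. f ys + g ys)"
  proof
    assume "h \<in> uce_add (U f) (U g)"
    then obtain c d where c: "c \<in> U f" and d: "d \<in> U g" and h: "h = (\<lambda>ys. c ys + d ys)"
      unfolding uce_add_def by auto
    from R_add[OF c[unfolded ucls_mem] d[unfolded ucls_mem]]
    show "h \<in> U (\<lambda>ys. f ys + g ys)" unfolding ucls_mem h by (rule R_eq) simp
  next
    assume "h \<in> U (\<lambda>ys. f ys + g ys)"
    then have "(\<lambda>ys. h ys - g ys) \<in> U f" by (simp add: ucls_mem algebra_simps)
    moreover have "g \<in> U g" by (simp add: ucls_mem R_zero)
    ultimately show "h \<in> uce_add (U f) (U g)" unfolding uce_add_def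
      by (intro CollectI exI[of _ "\<lambda>ys. h ys - g ys"] exI[of _ g] conjI) auto
  qed
qed

lemma uce_smul_ucls: "uce_smul n scale br \<alpha> c (U f) = U (\<lambda>ys. c * f ys)"
proof (rule set_eqI)
  fix h
  show "h \<in> uce_smul n scale br \<alpha> c (U f) \<longleftrightarrow> h \<in> U (\<lambda>ys. c * f ys)"
  proof
    assume "h \<in> uce_smul n scale br \<alpha> c (U f)"
    then obtain g r where g: "g \<in> U f" and r: "r \<in> R" and h: "h = (\<lambda>ys. c * g ys + r ys)"
      unfolding uce_smul_def by auto
    from R_add[OF R_scal[OF g[unfolded ucls_mem], of c] r]
    show "h \<in> U (\<lambda>ys. c * f ys)" unfolding ucls_mem h by (rule R_eq) (simp add: algebra_simps)
  next
    assume "h \<in> U (\<lambda>ys. c * f ys)"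
    then have "(\<lambda>ys. h ys - c * f ys) \<in> R" by (simp add: ucls_mem)
    moreover have "f \<in> U f" by (simp add: ucls_mem R_zero)
    ultimately show "h \<in> uce_smul n scale br \<alpha> c (U f)" unfolding uce_smul_def
      by (intro CollectI exI[of _ f] exI[of _ "\<lambda>ys. h ys - c * f ys"] conjI) auto
  qed
qed

lemma uF_aF: assumes f: "f \<in> freesp n" shows "uF scale br (aF f) = \<alpha> (uF scale br f)"
proof -
  let ?S = "{xs. f xs \<noteq> 0}"
  have fin: "finite ?S" using freesp_fs[OF f] unfolding fs_def .
  have sub: "{ys. aF f ys \<noteq> 0} \<subseteq> map \<alpha> ` ?S" by (auto dest: aF_nz)
  have "uF scale br (aF f) = (\<Sum>ys\<in>map \<alpha> ` ?S. scale (aF f ys) (br ys))"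
    by (rule uF_eq[OF _ sub]) (use fin in simp)
  also have "\<dots> = (\<Sum>ys\<in>map \<alpha> ` ?S. \<Sum>xs\<in>{xs\<in>?S. map \<alpha> xs = ys}. scale (f xs) (br (map \<alpha> xs)))"
  proof (rule sum.cong[OF refl])
    fix ys assume "ys \<in> map \<alpha> ` ?S"
    have "scale (aF f ys) (br ys) = scale (\<Sum>xs\<in>{xs\<in>?S. map \<alpha> xs = ys}. f xs) (br ys)"
      using aF_eq[OF fin, of f ys] by simp
    also have "\<dots> = (\<Sum>xs\<in>{xs\<in>?S. map \<alpha> xs = ys}. scale (f xs) (br ys))"
      by (simp add: V.scale_sum_left)
    finally show "scale (aF f ys) (br ys) = (\<Sum>xs\<in>{xs\<in>?S. map \<alpha> xs = ys}. scale (f xs) (br (map \<alpha> xs)))"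
      by simp
  qed
  also have "\<dots> = (\<Sum>xs\<in>?S. scale (f xs) (br (map \<alpha> xs)))"
    by (rule sum.group) (use fin in auto)
  also have "\<dots> = (\<Sum>xs\<in>?S. \<alpha> (scale (f xs) (br xs)))"
  proof (rule sum.cong[OF refl])
    fix xs assume "xs \<in> ?S"
    then have "length xs = n" using f unfolding freesp_def by auto
    then show "scale (f xs) (br (map \<alpha> xs)) = \<alpha> (scale (f xs) (br xs))"
      by (simp add: A.scale mult)
  qed
  also have "\<dots> = \<alpha> (uF scale br f)" unfolding uF_def by (simp add: A.sum)
  finally show ?thesis .
qed

lemma uF_surj: "\<exists>f\<in>freesp n. uF scale br f = v" if perf: "perfect n scale br"
proof -
  let ?P = "{v. \<exists>f\<in>freesp n. uF scale br f = v}"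
  have "v \<in> V.span {br xs | xs. length xs = n}" using perf unfolding perfect_def by simp
  moreover have "V.subspace ?P" unfolding V.subspace_def
  proof (intro conjI ballI allI)
    show "0 \<in> ?P" using freesp_zero uF_zero by auto
  next
    fix x y assume "x \<in> ?P" "y \<in> ?P"
    then obtain f g where "f \<in> freesp n" "g \<in> freesp n" "uF scale br f = x" "uF scale br g = y" by auto
    then show "x + y \<in> ?P"
      using freesp_lin[of f n g 1 1] uF_add[OF freesp_fs freesp_fs, of f n g n] by (auto intro!: bexI[of _ "\<lambda>y. f y + g y"])
  next
    fix c x assume "x \<in> ?P"
    then obtain f where "f \<in> freesp n" "uF scale br f = x" by auto
    then show "scale c x \<in> ?P"
      using freesp_lin[of f n f c 0] uF_scal[OF freesp_fs, of f n c] by (auto intro!: bexI[of _ "\<lambda>y. c * f y"])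
  qed
  moreover have "x \<in> ?P" if "x \<in> {br xs | xs. length xs = n}" for x
    using that freesp_tens uF_tens by blast
  ultimately have "v \<in> ?P" by (rule V.span_subspace_induct)
  then show ?thesis by simp
qed

lemma tens_sub: assumes l: "length l = n" "j < n" shows "V.subspace {a. tens (l[j := a]) \<in> R}"
  unfolding V.subspace_def
proof (intro conjI ballI allI)
  have "(\<lambda>ys. tens (l[j := 0 + 0]) ys - tens (l[j := 0]) ys - tens (l[j := 0]) ys) \<in> R"
    by (rule add_rel) (use l in auto)
  from R_neg[OF this] show "0 \<in> {a. tens (l[j := a]) \<in> R}" by simp
next
  fix a b assume "a \<in> {a. tens (l[j := a]) \<in> R}" "b \<in> {a. tens (l[j := a]) \<in> R}"
  then have a: "tens (l[j := a]) \<in> R" and b: "tens (l[j := b]) \<in> R" by auto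
  have "(\<lambda>ys. tens (l[j := a + b]) ys - tens (l[j := a]) ys - tens (l[j := b]) ys) \<in> R"
    by (rule add_rel) (use l in auto)
  from R_add[OF R_add[OF this a] b] have "tens (l[j := a + b]) \<in> R" by (rule R_eq) simp
  then show "a + b \<in> {a. tens (l[j := a]) \<in> R}" by simp
next
  fix c a assume "a \<in> {a. tens (l[j := a]) \<in> R}"
  then have a: "tens (l[j := a]) \<in> R" by auto
  have "(\<lambda>ys. tens (l[j := scale c a]) ys - c * tens (l[j := a]) ys) \<in> R"
    by (rule smul_rel) (use l in auto)
  from R_add[OF this R_scal[OF a, of c]] have "tens (l[j := scale c a]) \<in> R" by (rule R_eq) simp
  then show "scale c a \<in> {a. tens (l[j := a]) \<in> R}" by simp
qed

lemma tens_zero_entry: "length l = n \<Longrightarrow> j < n \<Longrightarrow> tens (l[j := 0]) \<in> R"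
  using V.subspace_0[OF tens_sub] by auto

lemma tens_span: assumes l: "length l = n" "j < n" and perf: "perfect n scale br"
  and H: "\<And>xs. length xs = n \<Longrightarrow> tens (l[j := br xs]) \<in> R"
  shows "tens (l[j := a]) \<in> R"
proof -
  have "a \<in> V.span {br xs | xs. length xs = n}" using perf unfolding perfect_def by simp
  moreover note tens_sub[OF l]
  moreover have "x \<in> {a. tens (l[j := a]) \<in> R}" if "x \<in> {br xs | xs. length xs = n}" for x
    using that H by auto
  ultimately have "a \<in> {a. tens (l[j := a]) \<in> R}" by (rule V.span_subspace_induct)
  then show ?thesis by simp
qed

end

lemma lift_list: "(\<And>a. a \<in> A \<Longrightarrow> \<exists>k\<in>K. g k = a) \<Longrightarrow> set as \<subseteq> A \<Longrightarrow> \<exists>ks. set ks \<subseteq> K \<and> map g ks = as"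
proof (induction as)
  case Nil then show ?case by simp
next
  case (Cons a as)
  then obtain ks where "set ks \<subseteq> K" "map g ks = as" by auto
  moreover obtain k where "k \<in> K" "g k = a" using Cons by auto
  ultimately show ?case by (intro exI[of _ "k # ks"]) auto
qed

locale HLC2 = HLC +
  assumes perf: "perfect n scale br" and inj: "inj \<alpha>"
begin

abbreviation ZA where "ZA \<equiv> centre n (range \<alpha>) br 0"

lemma ZA_iff: "x \<in> ZA \<longleftrightarrow> x \<in> range \<alpha> \<and> (\<forall>ys i. set ys \<subseteq> range \<alpha> \<and> length ys = n - 1 \<and> i \<le> n - 1 \<longrightarrow>
                          br (take i ys @ x # drop i ys) = 0)"
  unfolding centre_def by auto

lemma step1: assumes rest: "set rest \<subseteq> range \<alpha>" "length rest = n - 1"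
  and Z: "\<And>c. c \<in> range \<alpha> \<Longrightarrow> br (c # rest) = 0"
  shows "tens (a0 # rest) \<in> R"
proof -
  have l: "length (a0 # rest) = n" "0 < n" using rest n2 by auto
  have "tens ((a0 # rest)[0 := a]) \<in> R" for a
  proof (rule tens_span[OF l perf])
    fix xs :: "'b list" assume xs: "length xs = n"
    obtain zs where zs: "map \<alpha> zs = rest" using lift_list[of "range \<alpha>" UNIV \<alpha> rest] rest by auto
    have lz: "length zs = n - 1" using zs rest by auto
    have D: "(\<lambda>ys. tens (br xs # map \<alpha> zs) ys - (\<Sum>i<n. tens ((map \<alpha> xs)[i := br (xs ! i # zs)]) ys)) \<in> R"
      by (rule delta2_rel[OF xs lz])
    have bz: "br (xs ! i # zs) = 0" if "i < n" for i
    proof -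
      have "\<alpha> (br (xs ! i # zs)) = br (\<alpha> (xs ! i) # rest)"
        using mult[of "xs ! i # zs"] lz zs n2 by simp
      also have "\<dots> = 0" using Z by simp
      finally have "\<alpha> (br (xs ! i # zs)) = \<alpha> 0" by (simp only: A.zero)
      then show ?thesis by (rule injD[OF inj])
    qed
    have S: "(\<lambda>ys. \<Sum>i<n. tens ((map \<alpha> xs)[i := br (xs ! i # zs)]) ys) \<in> R"
      by (rule R_sum) (auto simp: bz xs tens_zero_entry)
    from R_add[OF D S] have "tens (br xs # rest) \<in> R" by (rule R_eq) (simp add: zs)
    then show "tens ((a0 # rest)[0 := br xs]) \<in> R" by simp
  qed
  from this[of a0] show ?thesis by simp
qed

lemma pos_ge1: assumes x: "x \<in> ZA" and as: "set as \<subseteq> range \<alpha>" "length as = n - 1"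
  and i: "1 \<le> i" "i \<le> n - 1"
  shows "tens (take i as @ x # drop i as) \<in> R"
proof -
  obtain a0 as' where as_eq: "as = a0 # as'" using as n2 by (cases as) auto
  let ?rest = "take (i - 1) as' @ x # drop (i - 1) as'"
  have tk: "take i as @ x # drop i as = a0 # ?rest"
    using i by (cases i) (auto simp: as_eq)
  have xr: "x \<in> range \<alpha>" using x ZA_iff by auto
  have "tens (a0 # ?rest) \<in> R"
  proof (rule step1)
    show "set ?rest \<subseteq> range \<alpha>" using as as_eq xr by (auto dest: in_set_takeD in_set_dropD)
    show "length ?rest = n - 1" using as as_eq i by auto
    fix c assume c: "c \<in> range \<alpha>"
    have "c # ?rest = take i (c # as') @ x # drop i (c # as')"
      using i by (cases i) auto
    moreover have "br (take i (c # as') @ x # drop i (c # as')) = 0"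
    proof -
      have "set (c # as') \<subseteq> range \<alpha>" "length (c # as') = n - 1" using c as as_eq by auto
      then show ?thesis using x i unfolding ZA_iff by blast
    qed
    ultimately show "br (c # ?rest) = 0" by simp
  qed
  then show ?thesis using tk by simp
qed

lemma skew: assumes sq: "\<And>a cs. a \<in> range \<alpha> \<Longrightarrow> set cs \<subseteq> range \<alpha> \<Longrightarrow> length cs = n - 2 \<Longrightarrow> tens (a # a # cs) \<in> R"
  and a: "a \<in> range \<alpha>" and b: "b \<in> range \<alpha>" and cs: "set cs \<subseteq> range \<alpha>" "length cs = n - 2"
  shows "(\<lambda>ys. tens (a # b # cs) ys + tens (b # a # cs) ys) \<in> R"
proof -
  have ab: "a + b \<in> range \<alpha>" using a b by (auto simp: A.add[symmetric])
  have len: "length ((a + b) # (a + b) # cs) = n" using cs n2 by auto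
  have D0: "(\<lambda>ys. tens (((a + b) # (a + b) # cs)[0 := a + b]) ys - tens (((a + b) # (a + b) # cs)[0 := a]) ys
       - tens (((a + b) # (a + b) # cs)[0 := b]) ys) \<in> R"
    by (rule add_rel) (use len in auto)
  have D1: "(\<lambda>ys. tens ((a # (a + b) # cs)[1 := a + b]) ys - tens ((a # (a + b) # cs)[1 := a]) ys
       - tens ((a # (a + b) # cs)[1 := b]) ys) \<in> R"
    by (rule add_rel) (use len n2 in auto)
  have D2: "(\<lambda>ys. tens ((b # (a + b) # cs)[1 := a + b]) ys - tens ((b # (a + b) # cs)[1 := a]) ys
       - tens ((b # (a + b) # cs)[1 := b]) ys) \<in> R"
    by (rule add_rel) (use len n2 in auto)
  have S1: "tens ((a + b) # (a + b) # cs) \<in> R" by (rule sq[OF ab cs])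
  have S2: "tens (a # a # cs) \<in> R" by (rule sq[OF a cs])
  have S3: "tens (b # b # cs) \<in> R" by (rule sq[OF b cs])
  have T: "(\<lambda>ys. tens ((a + b) # (a + b) # cs) ys
     - (tens (((a + b) # (a + b) # cs)[0 := a + b]) ys - tens (((a + b) # (a + b) # cs)[0 := a]) ys
       - tens (((a + b) # (a + b) # cs)[0 := b]) ys)
     - (tens ((a # (a + b) # cs)[1 := a + b]) ys - tens ((a # (a + b) # cs)[1 := a]) ys
       - tens ((a # (a + b) # cs)[1 := b]) ys)
     - (tens ((b # (a + b) # cs)[1 := a + b]) ys - tens ((b # (a + b) # cs)[1 := a]) ys
       - tens ((b # (a + b) # cs)[1 := b]) ys)
     - tens (a # a # cs) ys - tens (b # b # cs) ys) \<in> R"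
    using R_diff[OF R_diff[OF R_diff[OF R_diff[OF R_diff[OF S1 D0] D1] D2] S2] S3] .
  show ?thesis
  proof (rule R_eq[OF T])
    fix ys
    show "tens (a # b # cs) ys + tens (b # a # cs) ys = tens ((a + b) # (a + b) # cs) ys
     - (tens (((a + b) # (a + b) # cs)[0 := a + b]) ys - tens (((a + b) # (a + b) # cs)[0 := a]) ys
       - tens (((a + b) # (a + b) # cs)[0 := b]) ys)
     - (tens ((a # (a + b) # cs)[1 := a + b]) ys - tens ((a # (a + b) # cs)[1 := a]) ys
       - tens ((a # (a + b) # cs)[1 := b]) ys)
     - (tens ((b # (a + b) # cs)[1 := a + b]) ys - tens ((b # (a + b) # cs)[1 := a]) ys
       - tens ((b # (a + b) # cs)[1 := b]) ys)
     - tens (a # a # cs) ys - tens (b # b # cs) ys"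
      by (simp only: list_update_code One_nat_def) (simp add: algebra_simps)
  qed
qed

lemma pos0: assumes sq: "\<And>a cs. a \<in> range \<alpha> \<Longrightarrow> set cs \<subseteq> range \<alpha> \<Longrightarrow> length cs = n - 2 \<Longrightarrow> tens (a # a # cs) \<in> R"
  and x: "x \<in> ZA" and as: "set as \<subseteq> range \<alpha>" "length as = n - 1"
  shows "tens (x # as) \<in> R"
proof -
  obtain a1 cs where as_eq: "as = a1 # cs" using as n2 by (cases as) auto
  have xr: "x \<in> range \<alpha>" using x ZA_iff by auto
  have sk: "(\<lambda>ys. tens (x # a1 # cs) ys + tens (a1 # x # cs) ys) \<in> R"
    by (rule skew[OF sq xr]) (use as as_eq in auto)
  have "tens (take 1 as @ x # drop 1 as) \<in> R" by (rule pos_ge1[OF x as]) (use n2 in auto)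
  then have p1: "tens (a1 # x # cs) \<in> R" by (simp add: as_eq)
  from R_diff[OF sk p1] show ?thesis by (rule R_eq) (simp add: as_eq)
qed

lemma key: assumes sq: "\<And>a cs. a \<in> range \<alpha> \<Longrightarrow> set cs \<subseteq> range \<alpha> \<Longrightarrow> length cs = n - 2 \<Longrightarrow> tens (a # a # cs) \<in> R"
  and x: "x \<in> ZA" and as: "set as \<subseteq> range \<alpha>" "length as = n - 1" and i: "i \<le> n - 1"
  shows "tens (take i as @ x # drop i as) \<in> R"
proof (cases "i = 0")
  case True
  have "tens (x # as) \<in> R" by (rule pos0[OF sq x as])
  then show ?thesis using True by (simp only: take_0 drop_0 append_Nil)
next
  case False
  then have "1 \<le> i" by simp
  then show ?thesis by (rule pos_ge1[OF x as _ i])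
qed

abbreviation W where "W \<equiv> alpha_uce n scale br \<alpha> ` uce n scale br \<alpha>"
abbreviation BU where "BU \<equiv> br_uce n scale br \<alpha>"
abbreviation ZW where "ZW \<equiv> centre n W BU R"

lemma W_eq: "W = (\<lambda>f. U (aF f)) ` freesp n"
  unfolding uce_def image_comp comp_def by (rule image_cong[OF refl]) (simp add: alpha_ucls freesp_fs)

lemma uL_W: "f \<in> freesp n \<Longrightarrow> uL scale br (U (aF f)) = \<alpha> (uF scale br f)"
  by (simp add: uL_ucls aF_fs freesp_fs uF_aF)

lemma uL_W_range: "w \<in> W \<Longrightarrow> uL scale br w \<in> range \<alpha>"
  unfolding W_eq by (auto simp: uL_W)

lemma uL_W_surj: "a \<in> range \<alpha> \<Longrightarrow> \<exists>w\<in>W. uL scale br w = a"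
proof -
  assume "a \<in> range \<alpha>"
  then obtain v where v: "a = \<alpha> v" by auto
  obtain f where f: "f \<in> freesp n" "uF scale br f = v" using uF_surj[OF perf] by blast
  show ?thesis unfolding W_eq using f v uL_W by (intro bexI[of _ "U (aF f)"]) auto
qed

lemma uL_W_img: "uL scale br ` W = range \<alpha>"
proof (intro equalityI subsetI)
  fix a assume "a \<in> uL scale br ` W"
  then obtain w where "w \<in> W" "a = uL scale br w" by (rule imageE)
  then show "a \<in> range \<alpha>" using uL_W_range by simp
next
  fix a assume "a \<in> range \<alpha>"
  then obtain w where "w \<in> W" "uL scale br w = a" using uL_W_surj by blast
  then show "a \<in> uL scale br ` W" by (metis imageI)
qed

lemma sq_of_CU: assumes CU: "condC n (uce n scale br \<alpha>) BU (alpha_uce n scale br \<alpha>) R"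
  and a: "a \<in> range \<alpha>" and cs: "set cs \<subseteq> range \<alpha>" "length cs = n - 2"
  shows "tens (a # a # cs) \<in> R"
proof -
  have sur: "\<exists>k\<in>uce n scale br \<alpha>. uL scale br (alpha_uce n scale br \<alpha> k) = b" if "b \<in> range \<alpha>" for b
  proof -
    from that obtain v where v: "b = \<alpha> v" by blast
    obtain f where f: "f \<in> freesp n" "uF scale br f = v" using uF_surj[OF perf] by blast
    show ?thesis unfolding uce_def using f v
      by (intro bexI[of _ "U f"]) (auto simp: alpha_ucls freesp_fs uL_W)
  qed
  obtain k where k: "k \<in> uce n scale br \<alpha>" "uL scale br (alpha_uce n scale br \<alpha> k) = a" using sur[OF a] by blast
  obtain ks where ks: "set ks \<subseteq> uce n scale br \<alpha>" "map (\<lambda>k. uL scale br (alpha_uce n scale br \<alpha> k)) ks = cs"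
    using lift_list[of "range \<alpha>" "uce n scale br \<alpha>" "\<lambda>k. uL scale br (alpha_uce n scale br \<alpha> k)" cs] sur cs(1) by metis
  have len: "length ks = n - 2" using ks cs by (metis length_map)
  have CU': "\<And>k ks. k \<in> uce n scale br \<alpha> \<Longrightarrow> set ks \<subseteq> uce n scale br \<alpha> \<Longrightarrow> length ks = n - 2 \<Longrightarrow>
     BU (alpha_uce n scale br \<alpha> k # alpha_uce n scale br \<alpha> k # map (alpha_uce n scale br \<alpha>) ks) = R"
    using CU unfolding condC_def by blast
  have "BU (alpha_uce n scale br \<alpha> k # alpha_uce n scale br \<alpha> k # map (alpha_uce n scale br \<alpha>) ks) = R"
    by (rule CU'[OF k(1) ks(1) len])
  then have "U (tens (a # a # cs)) = R" unfolding br_uce_def using k ks by (simp add: comp_def)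
  then show ?thesis by (simp add: ucls_eq_R)
qed

lemma ZW_iff: assumes sq: "\<And>a cs. a \<in> range \<alpha> \<Longrightarrow> set cs \<subseteq> range \<alpha> \<Longrightarrow> length cs = n - 2 \<Longrightarrow> tens (a # a # cs) \<in> R"
  and w: "w \<in> W" shows "w \<in> ZW \<longleftrightarrow> uL scale br w \<in> ZA"
proof -
  have e: "BU (take i ys @ w # drop i ys) = R \<longleftrightarrow>
     tens (take i (map (uL scale br) ys) @ uL scale br w # drop i (map (uL scale br) ys)) \<in> R" for ys i
    unfolding br_uce_def ucls_eq_R by (simp only: map_append list.map take_map drop_map)
  have "w \<in> ZW \<longleftrightarrow> (\<forall>ys i. set ys \<subseteq> W \<and> length ys = n - 1 \<and> i \<le> n - 1 \<longrightarrow>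
     BU (take i ys @ w # drop i ys) = R)"
    unfolding centre_def mem_Collect_eq using w by (simp only: simp_thms)
  also have "\<dots> \<longleftrightarrow> (\<forall>ys i. set ys \<subseteq> W \<and> length ys = n - 1 \<and> i \<le> n - 1 \<longrightarrow>
     tens (take i (map (uL scale br) ys) @ uL scale br w # drop i (map (uL scale br) ys)) \<in> R)"
    by (simp only: e)
  also have "\<dots> \<longleftrightarrow> uL scale br w \<in> ZA"
  proof
    assume H: "\<forall>ys i. set ys \<subseteq> W \<and> length ys = n - 1 \<and> i \<le> n - 1 \<longrightarrow>
     tens (take i (map (uL scale br) ys) @ uL scale br w # drop i (map (uL scale br) ys)) \<in> R"
    show "uL scale br w \<in> ZA" unfolding ZA_iff
    proof (intro conjI allI impI)
      show "uL scale br w \<in> range \<alpha>" by (rule uL_W_range[OF w])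
      fix as i assume as: "set as \<subseteq> range \<alpha> \<and> length as = n - 1 \<and> i \<le> n - 1"
      have as1: "set as \<subseteq> range \<alpha>" using as by simp
      obtain ys where ys: "set ys \<subseteq> W" "map (uL scale br) ys = as"
        using lift_list[of "range \<alpha>" W "uL scale br" as] uL_W_surj as1 by metis
      have "length ys = n - 1" using ys as by (metis length_map)
      then have "tens (take i (map (uL scale br) ys) @ uL scale br w # drop i (map (uL scale br) ys)) \<in> R"
        using H[rule_format, of ys i] ys as by simp
      then have "tens (take i as @ uL scale br w # drop i as) \<in> R" using ys by simp
      from uF_R[OF this] show "br (take i as @ uL scale br w # drop i as) = 0" by (simp add: uF_tens)
    qed
  next
    assume Z: "uL scale br w \<in> ZA"
    show "\<forall>ys i. set ys \<subseteq> W \<and> length ys = n - 1 \<and> i \<le> n - 1 \<longrightarrow>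
     tens (take i (map (uL scale br) ys) @ uL scale br w # drop i (map (uL scale br) ys)) \<in> R"
    proof (intro allI impI)
      fix ys i assume ys: "set ys \<subseteq> W \<and> length ys = n - 1 \<and> i \<le> n - 1"
      have s1: "set (map (uL scale br) ys) \<subseteq> range \<alpha>" using ys uL_W_range by auto
      have s2: "length (map (uL scale br) ys) = n - 1" using ys by simp
      have s3: "i \<le> n - 1" using ys by simp
      show "tens (take i (map (uL scale br) ys) @ uL scale br w # drop i (map (uL scale br) ys)) \<in> R"
        using key[OF sq Z s1 s2 s3] .
    qed
  qed
  finally show ?thesis .
qed

lemma upd_mid: "i \<le> length ys \<Longrightarrow> (take i ys @ u # drop i ys)[i := v] = take i ys @ v # drop i ys"
  by (simp add: list_update_append)

lemma ZA_zero: "0 \<in> ZA"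
  unfolding ZA_iff
proof (intro conjI allI impI)
  show "0 \<in> range \<alpha>" using A.zero by (metis rangeI)
  fix ys i assume ys: "set ys \<subseteq> range \<alpha> \<and> length ys = n - 1 \<and> i \<le> n - 1"
  have "br ((take i ys @ 0 # drop i ys)[i := 0]) = 0" by (rule br_zero) (use ys n2 in auto)
  then show "br (take i ys @ 0 # drop i ys) = 0" using ys by (simp add: upd_mid)
qed

lemma ZA_add: assumes x: "x \<in> ZA" and y: "y \<in> ZA" shows "x + y \<in> ZA"
  unfolding ZA_iff
proof (intro conjI allI impI)
  show "x + y \<in> range \<alpha>" using x y unfolding ZA_iff by (auto simp: A.add[symmetric])
  fix ys i assume ys: "set ys \<subseteq> range \<alpha> \<and> length ys = n - 1 \<and> i \<le> n - 1"
  have "br ((take i ys @ 0 # drop i ys)[i := x + y]) = br ((take i ys @ 0 # drop i ys)[i := x]) + br ((take i ys @ 0 # drop i ys)[i := y])"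
    by (rule nl_add) (use ys n2 in auto)
  moreover have "br (take i ys @ x # drop i ys) = 0" using x ys unfolding ZA_iff by blast
  moreover have "br (take i ys @ y # drop i ys) = 0" using y ys unfolding ZA_iff by blast
  ultimately show "br (take i ys @ (x + y) # drop i ys) = 0" using ys by (simp add: upd_mid)
qed

lemma ZA_neg: assumes x: "x \<in> ZA" shows "- x \<in> ZA"
  unfolding ZA_iff
proof (intro conjI allI impI)
  show "- x \<in> range \<alpha>" using x unfolding ZA_iff by (auto simp: A.neg[symmetric])
  fix ys i assume ys: "set ys \<subseteq> range \<alpha> \<and> length ys = n - 1 \<and> i \<le> n - 1"
  have "br ((take i ys @ 0 # drop i ys)[i := scale (-1) x]) = scale (-1) (br ((take i ys @ 0 # drop i ys)[i := x]))"
    by (rule nl_smul) (use ys n2 in auto)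
  moreover have "br (take i ys @ x # drop i ys) = 0" using x ys unfolding ZA_iff by blast
  ultimately show "br (take i ys @ (- x) # drop i ys) = 0" using ys by (simp add: upd_mid)
qed

lemma uL_add_W: "v \<in> W \<Longrightarrow> w \<in> W \<Longrightarrow> uL scale br (uce_add v w) = uL scale br v + uL scale br w"
  unfolding W_eq
  by (auto simp: uce_add_ucls uL_ucls fs_add aF_fs freesp_fs uF_add)

lemma uL_smul_W: "w \<in> W \<Longrightarrow> uL scale br (uce_smul n scale br \<alpha> c w) = scale c (uL scale br w)"
  unfolding W_eq
  by (auto simp: uce_smul_ucls uL_ucls fs_scal aF_fs freesp_fs uF_scal)

lemma uL_BU: "uL scale br (BU ws) = br (map (uL scale br) ws)"
  unfolding br_uce_def by (simp add: uL_ucls fs_tens uF_tens)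

lemma cls_sub: assumes sq: "\<And>a cs. a \<in> range \<alpha> \<Longrightarrow> set cs \<subseteq> range \<alpha> \<Longrightarrow> length cs = n - 2 \<Longrightarrow> tens (a # a # cs) \<in> R"
  and v: "v \<in> W" and w: "w \<in> W" and d: "uL scale br v - uL scale br w \<in> ZA"
  shows "cls uce_add ZW v \<subseteq> cls uce_add ZW w"
proof
  fix X assume "X \<in> cls uce_add ZW v"
  then obtain z where z: "z \<in> ZW" and X: "X = uce_add v z" unfolding cls_def by auto
  have zW: "z \<in> W" using z unfolding centre_def mem_Collect_eq by (rule conjunct1)
  obtain f where f: "f \<in> freesp n" "v = U (aF f)" using v unfolding W_eq by auto
  obtain g where g: "g \<in> freesp n" "w = U (aF g)" using w unfolding W_eq by auto
  obtain h where h: "h \<in> freesp n" "z = U (aF h)" using zW unfolding W_eq by auto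
  define h' where "h' = (\<lambda>y. f y - g y + h y)"
  have h'f: "h' \<in> freesp n" unfolding h'_def
    using freesp_lin[OF freesp_lin[OF f(1) g(1), of 1 "-1"] h(1), of 1 1] by (simp only: mult_1 mult_minus1 diff_conv_add_uminus)
  have fsf: "fs f" "fs g" "fs h" using f g h freesp_fs by auto
  have z'W: "U (aF h') \<in> W" unfolding W_eq using h'f by auto
  have u1: "uF scale br h' = uF scale br f - uF scale br g + uF scale br h"
    unfolding h'_def by (simp add: uF_add uF_diff fs_diff fsf)
  have "uL scale br (U (aF h')) = \<alpha> (uF scale br f) - \<alpha> (uF scale br g) + \<alpha> (uF scale br h)"
    unfolding uL_W[OF h'f] u1 by (simp only: A.add A.diff)
  then have e: "uL scale br (U (aF h')) = (uL scale br v - uL scale br w) + uL scale br z"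
    unfolding f(2) g(2) h(2) uL_W[OF f(1)] uL_W[OF g(1)] uL_W[OF h(1)] .
  have zZ: "uL scale br z \<in> ZA" using ZW_iff[OF sq zW] z by (rule iffD1)
  have "uL scale br (U (aF h')) \<in> ZA" unfolding e by (rule ZA_add[OF d zZ])
  then have z'Z: "U (aF h') \<in> ZW" using ZW_iff[OF sq z'W] by (rule iffD2[rotated])
  have ah: "aF h' = (\<lambda>ys. aF f ys - aF g ys + aF h ys)"
    unfolding h'_def aF_add[OF fs_diff[OF fsf(1,2)] fsf(3)] aF_diff[OF fsf(1,2)] by simp
  have "uce_add w (U (aF h')) = uce_add v z"
    unfolding f(2) g(2) h(2) uce_add_ucls ah by simp
  then show "X \<in> cls uce_add ZW w" unfolding cls_def X
    by (intro CollectI exI[of _ "U (aF h')"] conjI z'Z) simp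
qed


lemma R_in_W: "R \<in> W"
proof -
  have "U (aF (\<lambda>y. 0)) \<in> W" unfolding W_eq using freesp_zero by auto
  then show ?thesis by (simp only: aF_zero ucls_zero)
qed

lemma uL_R: "uL scale br R = 0"
  using uL_ucls[OF fs_zero] by (simp only: ucls_zero uF_zero)

lemma cls_W_iff: assumes sq: "\<And>a cs. a \<in> range \<alpha> \<Longrightarrow> set cs \<subseteq> range \<alpha> \<Longrightarrow> length cs = n - 2 \<Longrightarrow> tens (a # a # cs) \<in> R"
  and v: "v \<in> W" and w: "w \<in> W"
  shows "cls uce_add ZW v = cls uce_add ZW w \<longleftrightarrow> uL scale br v - uL scale br w \<in> ZA"
proof
  assume eq: "cls uce_add ZW v = cls uce_add ZW w"
  have "uL scale br R \<in> ZA" unfolding uL_R by (rule ZA_zero)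
  then have RZ: "R \<in> ZW" using ZW_iff[OF sq R_in_W] by blast
  obtain f where f: "f \<in> freesp n" "v = U (aF f)" using v unfolding W_eq by auto
  have vR: "v = uce_add v R" unfolding f(2) by (simp only: ucls_zero[symmetric] uce_add_ucls add_0_right)
  have "v \<in> cls uce_add ZW v" unfolding cls_def by (intro CollectI exI[of _ R] conjI RZ vR)
  then have "v \<in> cls uce_add ZW w" unfolding eq .
  then obtain z where z: "v = uce_add w z" "z \<in> ZW" unfolding cls_def mem_Collect_eq by (elim exE conjE)
  have zW: "z \<in> W" using z(2) unfolding centre_def mem_Collect_eq by (rule conjunct1)
  have "uL scale br v = uL scale br w + uL scale br z" unfolding z(1) by (rule uL_add_W[OF w zW])
  moreover have "uL scale br z \<in> ZA" using ZW_iff[OF sq zW] z(2) by (rule iffD1)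
  ultimately show "uL scale br v - uL scale br w \<in> ZA" by simp
next
  assume d: "uL scale br v - uL scale br w \<in> ZA"
  have d': "uL scale br w - uL scale br v \<in> ZA" using ZA_neg[OF d] by simp
  show "cls uce_add ZW v = cls uce_add ZW w"
    using cls_sub[OF sq v w d] cls_sub[OF sq w v d'] by (rule equalityI)
qed

end

lemma cls_plus_eq:
  fixes Z :: "'a::ab_group_add set"
  assumes "0 \<in> Z" "\<And>x y. x \<in> Z \<Longrightarrow> y \<in> Z \<Longrightarrow> x + y \<in> Z" "\<And>x. x \<in> Z \<Longrightarrow> - x \<in> Z"
  shows "cls (+) Z a = cls (+) Z b \<longleftrightarrow> a - b \<in> Z"
proof
  assume "cls (+) Z a = cls (+) Z b"
  moreover have "a \<in> cls (+) Z a" unfolding cls_def using assms(1) by (intro CollectI exI[of _ 0]) simp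
  ultimately obtain z where "z \<in> Z" "a = b + z" unfolding cls_def by auto
  then show "a - b \<in> Z" by simp
next
  assume d: "a - b \<in> Z"
  have "cls (+) Z a \<subseteq> cls (+) Z b" if d: "a - b \<in> Z" for a b
  proof
    fix X assume "X \<in> cls (+) Z a"
    then obtain z where z: "z \<in> Z" "X = a + z" unfolding cls_def by auto
    have "(a - b) + z \<in> Z" using assms(2) d z by auto
    moreover have "X = b + ((a - b) + z)" using z by simp
    ultimately show "X \<in> cls (+) Z b" unfolding cls_def by blast
  qed
  moreover have "b - a \<in> Z" using assms(3)[OF d] by simp
  ultimately show "cls (+) Z a = cls (+) Z b" using d by blast
qed

lemma bij_quot:
  assumes img: "h ` S = T" and eqv: "\<And>x y. x \<in> S \<Longrightarrow> y \<in> S \<Longrightarrow> (c1 x = c1 y) \<longleftrightarrow> (c2 (h x) = c2 (h y))"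
  shows "\<exists>\<phi>. bij_betw \<phi> (c1 ` S) (c2 ` T) \<and> (\<forall>x\<in>S. \<phi> (c1 x) = c2 (h x))"
proof -
  define \<phi> where "\<phi> X = c2 (h (SOME x. x \<in> S \<and> c1 x = X))" for X
  have phi: "\<phi> (c1 x) = c2 (h x)" if x: "x \<in> S" for x
  proof -
    have ex: "\<exists>y. y \<in> S \<and> c1 y = c1 x" using x by auto
    define y where "y = (SOME y. y \<in> S \<and> c1 y = c1 x)"
    have "y \<in> S \<and> c1 y = c1 x" unfolding y_def by (rule someI_ex[OF ex])
    then show ?thesis unfolding \<phi>_def y_def[symmetric] using eqv x by blast
  qed
  have "bij_betw \<phi> (c1 ` S) (c2 ` T)"
    unfolding bij_betw_def
  proof
    show "inj_on \<phi> (c1 ` S)"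
    proof (rule inj_onI)
      fix X Y assume "X \<in> c1 ` S" "Y \<in> c1 ` S" "\<phi> X = \<phi> Y"
      then obtain x y where "x \<in> S" "y \<in> S" "X = c1 x" "Y = c1 y" "c2 (h x) = c2 (h y)" using phi by auto
      then show "X = Y" using eqv by blast
    qed
    show "\<phi> ` c1 ` S = c2 ` T" using phi img by (auto simp: image_comp)
  qed
  then show ?thesis using phi by blast
qed

theorem theorem5p7:
  fixes n :: nat
    and scale :: "'k::field \<Rightarrow> 'v::ab_group_add \<Rightarrow> 'v"
    and br :: "'v list \<Rightarrow> 'v"
    and \<alpha> :: "'v \<Rightarrow> 'v"
  assumes HL: "hom_leibniz_nalg n scale br \<alpha>"
    and perf: "perfect n scale br"
    and inj: "inj \<alpha>"
    and CL: "condC n UNIV br \<alpha> 0"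
    and CU: "condC n (uce n scale br \<alpha>) (br_uce n scale br \<alpha>) (alpha_uce n scale br \<alpha>)
                (rels n scale br \<alpha>)"
  shows "\<exists>\<phi>. bij_betw \<phi>
           (quot uce_add (alpha_uce n scale br \<alpha> ` uce n scale br \<alpha>)
              (centre n (alpha_uce n scale br \<alpha> ` uce n scale br \<alpha>) (br_uce n scale br \<alpha>)
                 (rels n scale br \<alpha>)))
           (quot (+) (range \<alpha>) (centre n (range \<alpha>) br 0))
         \<and> (\<forall>w \<in> alpha_uce n scale br \<alpha> ` uce n scale br \<alpha>.
              \<phi> (cls uce_add (centre n (alpha_uce n scale br \<alpha> ` uce n scale br \<alpha>) (br_uce n scale br \<alpha>)
                     (rels n scale br \<alpha>)) w)
              = cls (+) (centre n (range \<alpha>) br 0) (uL scale br w))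
         \<and> (\<forall>v \<in> alpha_uce n scale br \<alpha> ` uce n scale br \<alpha>. \<forall>w \<in> alpha_uce n scale br \<alpha> ` uce n scale br \<alpha>.
              uL scale br (uce_add v w) = uL scale br v + uL scale br w)
         \<and> (\<forall>c. \<forall>w \<in> alpha_uce n scale br \<alpha> ` uce n scale br \<alpha>.
              uL scale br (uce_smul n scale br \<alpha> c w) = scale c (uL scale br w))
         \<and> (\<forall>ws. set ws \<subseteq> alpha_uce n scale br \<alpha> ` uce n scale br \<alpha> \<and> length ws = n \<longrightarrow>
              uL scale br (br_uce n scale br \<alpha> ws) = br (map (uL scale br) ws))"
proof -
  interpret HLC2 n scale br \<alpha>
    unfolding HLC2_def HLC2_axioms_def HLC_def using HL perf inj by blast
  have sq: "\<And>a cs. a \<in> range \<alpha> \<Longrightarrow> set cs \<subseteq> range \<alpha> \<Longrightarrow> length cs = n - 2 \<Longrightarrow> tens (a # a # cs) \<in> R"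
    by (rule sq_of_CU[OF CU])
  have ZAcls: "cls (+) ZA a = cls (+) ZA b \<longleftrightarrow> a - b \<in> ZA" for a b
    by (rule cls_plus_eq) (auto intro: ZA_zero ZA_add ZA_neg)
  have eqv: "(cls uce_add ZW x = cls uce_add ZW y) \<longleftrightarrow> (cls (+) ZA (uL scale br x) = cls (+) ZA (uL scale br y))"
    if "x \<in> W" "y \<in> W" for x y
    unfolding ZAcls by (rule cls_W_iff[OF sq that])
  obtain \<phi> where phi: "bij_betw \<phi> (cls uce_add ZW ` W) (cls (+) ZA ` range \<alpha>)"
    "\<forall>x\<in>W. \<phi> (cls uce_add ZW x) = cls (+) ZA (uL scale br x)"
    using bij_quot[of "uL scale br" W "range \<alpha>" "cls uce_add ZW" "cls (+) ZA", OF uL_W_img eqv] by blast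
  show ?thesis
    unfolding quot_def
    apply (rule exI[of _ \<phi>])
    apply (intro conjI)
    using phi uL_add_W uL_smul_W uL_BU by auto
qed

end
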